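(* If the network $T$ is symmetric and the confirmation-bias network $T^*$ is strongly connected, then all agents have equal influence $s_i=1/n$ in $T$, and confirmation bias does not alter any agent's influence, i.e. $s^*_i=s_i=1/n$ for all $i$.
   Context: Agents $N=\{1,\dots,n\}$ communicate through a network $T$, an $n\times n$ row-stochastic matrix with entries $T_{ij}\in[0,1]$, assumed strongly connected and aperiodic. Each agent has an initial belief $x_{i0}\in[0,1]$. Confirmation bias of strength $q\in[0,1]$ (common to all agents) produces $T^*$: for $j\ne i$, if $|x_{i0}-x_{j0}|>1-q$ then $T^*_{ij}=0$ and $T_{ij}$ is added to the self-link $T^*_{ii}$; otherwise $T^*_{ij}=T_{ij}$. The influence vector $s$ of a network $P$ is the left eigenvector for eigenvalue $1$, normalized to sum to $1$: $s=sP$, i.e. $s_i=\sum_j P_{ji}s_j$; $s$ and $s^*$ denote the influence vectors of $T$ and $T^*$. *)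

theory Defs
  imports Complex_Main
begin

text \<open>Agents are N = {1..n}; an n x n matrix is a function nat => nat => real,
  only its entries with indices in {1..n} are relevant.\<close>

definition row_stochastic :: "nat \<Rightarrow> (nat \<Rightarrow> nat \<Rightarrow> real) \<Rightarrow> bool" where
  "row_stochastic n P \<longleftrightarrow>
     (\<forall>i\<in>{1..n}. \<forall>j\<in>{1..n}. 0 \<le> P i j \<and> P i j \<le> 1) \<and>
     (\<forall>i\<in>{1..n}. (\<Sum>j\<in>{1..n}. P i j) = 1)"

definition net_edges :: "nat \<Rightarrow> (nat \<Rightarrow> nat \<Rightarrow> real) \<Rightarrow> (nat \<times> nat) set" where
  "net_edges n P = {(i, j). i \<in> {1..n} \<and> j \<in> {1..n} \<and> P i j > 0}"

definition strongly_connected :: "nat \<Rightarrow> (nat \<Rightarrow> nat \<Rightarrow> real) \<Rightarrow> bool" where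
  "strongly_connected n P \<longleftrightarrow> (\<forall>i\<in>{1..n}. \<forall>j\<in>{1..n}. (i, j) \<in> (net_edges n P)\<^sup>+)"

definition aperiodic :: "nat \<Rightarrow> (nat \<Rightarrow> nat \<Rightarrow> real) \<Rightarrow> bool" where
  "aperiodic n P \<longleftrightarrow>
     (\<forall>i\<in>{1..n}. Gcd {k::nat. k \<ge> 1 \<and> (i, i) \<in> (net_edges n P) ^^ k} = 1)"

definition symmetric_net :: "nat \<Rightarrow> (nat \<Rightarrow> nat \<Rightarrow> real) \<Rightarrow> bool" where
  "symmetric_net n P \<longleftrightarrow> (\<forall>i\<in>{1..n}. \<forall>j\<in>{1..n}. P i j = P j i)"

definition conf_net :: "nat \<Rightarrow> (nat \<Rightarrow> nat \<Rightarrow> real) \<Rightarrow> (nat \<Rightarrow> real) \<Rightarrow> real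
    \<Rightarrow> nat \<Rightarrow> nat \<Rightarrow> real" where
  "conf_net n T x0 q i j =
     (if i = j then T i i + (\<Sum>k\<in>{k\<in>{1..n}. k \<noteq> i \<and> \<bar>x0 i - x0 k\<bar> > 1 - q}. T i k)
      else if \<bar>x0 i - x0 j\<bar> > 1 - q then 0 else T i j)"

definition influence_vector :: "nat \<Rightarrow> (nat \<Rightarrow> nat \<Rightarrow> real) \<Rightarrow> (nat \<Rightarrow> real) \<Rightarrow> bool" where
  "influence_vector n P s \<longleftrightarrow>
     (\<forall>i\<in>{1..n}. s i = (\<Sum>j\<in>{1..n}. P j i * s j)) \<and> (\<Sum>i\<in>{1..n}. s i) = 1"

end

theory Submission
  imports Defs
begin

lemma uniform_inf:
  assumes n1: "n \<ge> 1"
    and rs: "\<forall>i\<in>{1..n}. (\<Sum>j\<in>{1..n}. P i j) = 1"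
    and sym: "\<forall>i\<in>{1..n}. \<forall>j\<in>{1..n}. P i j = P j i"
  shows "influence_vector n P (\<lambda>_. 1 / real n)"
  unfolding influence_vector_def
proof (intro conjI ballI)
  fix i assume i: "i \<in> {1..n}"
  have "(\<Sum>j\<in>{1..n}. P j i * (1 / real n)) = (\<Sum>j\<in>{1..n}. P i j) * (1 / real n)"
    unfolding sum_distrib_right using sym i by (intro sum.cong) auto
  then show "1 / real n = (\<Sum>j\<in>{1..n}. P j i * (1 / real n))" using rs i by simp
next
  show "(\<Sum>i\<in>{1..n}. 1 / real n) = 1" using n1 by simp
qed

lemma harmonic_const:
  assumes n1: "n \<ge> 1"
    and nn: "\<forall>i\<in>{1..n}. \<forall>j\<in>{1..n}. 0 \<le> P i j"
    and rs: "\<forall>i\<in>{1..n}. (\<Sum>j\<in>{1..n}. P i j) = 1"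
    and sym: "\<forall>i\<in>{1..n}. \<forall>j\<in>{1..n}. P i j = P j i"
    and sc: "strongly_connected n P"
    and iv: "influence_vector n P s"
  shows "\<forall>i\<in>{1..n}. s i = 1 / real n"
proof -
  define A where "A = {1..n::nat}"
  have fin: "finite A" and ne: "A \<noteq> {}" using n1 by (auto simp: A_def)
  define M where "M = Max (s ` A)"
  have "M \<in> s ` A" using Max_in[of "s ` A"] fin ne unfolding M_def by auto
  then obtain i0 where i0: "i0 \<in> A" "s i0 = M" by auto
  have le: "\<And>j. j \<in> A \<Longrightarrow> s j \<le> M" unfolding M_def using fin by auto
  have harm: "\<And>i. i \<in> A \<Longrightarrow> s i = (\<Sum>j\<in>A. P i j * s j)"
    using iv sym unfolding influence_vector_def A_def by auto
  have edge: "s j = M" if e: "(i, j) \<in> net_edges n P" and si: "s i = M" for i j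
  proof -
    from e have i: "i \<in> A" and j: "j \<in> A" and p: "P i j > 0"
      by (auto simp: net_edges_def A_def)
    have "(\<Sum>k\<in>A. P i k * (M - s k)) = M * (\<Sum>k\<in>A. P i k) - (\<Sum>k\<in>A. P i k * s k)"
      by (simp add: algebra_simps sum_subtractf sum_distrib_left)
    also have "\<dots> = 0" using rs harm[OF i] si i by (simp add: A_def)
    finally have "(\<Sum>k\<in>A. P i k * (M - s k)) = 0" .
    moreover have "\<forall>k\<in>A. 0 \<le> P i k * (M - s k)"
    proof
      fix k assume k: "k \<in> A"
      have "0 \<le> P i k" using nn i k unfolding A_def by blast
      moreover have "0 \<le> M - s k" using le[OF k] by simp
      ultimately show "0 \<le> P i k * (M - s k)" by (rule mult_nonneg_nonneg)
    qed
    ultimately have "\<forall>k\<in>A. P i k * (M - s k) = 0"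
      by (simp add: sum_nonneg_eq_0_iff[OF fin])
    then have "P i j * (M - s j) = 0" using j by blast
    then show ?thesis using p by simp
  qed
  have reach: "(a, b) \<in> (net_edges n P)\<^sup>+ \<Longrightarrow> s a = M \<Longrightarrow> s b = M" for a b
  proof (induct rule: trancl_induct)
    case (base y) then show ?case using edge by blast
  next
    case (step y z) then show ?case using edge by blast
  qed
  have all: "\<forall>j\<in>A. s j = M"
  proof
    fix j assume j: "j \<in> A"
    have "(i0, j) \<in> (net_edges n P)\<^sup>+" using sc i0(1) j unfolding strongly_connected_def A_def by blast
    then show "s j = M" using reach i0(2) by blast
  qed
  have "(\<Sum>j\<in>A. s j) = 1" using iv unfolding influence_vector_def A_def by blast
  then have "real n * M = 1" using all by (simp add: A_def)
  then have "M = 1 / real n" using n1 by (simp add: field_simps)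
  then show ?thesis using all unfolding A_def by blast
qed

theorem mainTheorem2:
  fixes n :: nat and T :: "nat \<Rightarrow> nat \<Rightarrow> real" and x0 :: "nat \<Rightarrow> real" and q :: real
  assumes "n \<ge> 1"
    and "row_stochastic n T"
    and "strongly_connected n T"
    and "aperiodic n T"
    and "\<forall>i\<in>{1..n}. 0 \<le> x0 i \<and> x0 i \<le> 1"
    and "0 \<le> q" and "q \<le> 1"
    and "symmetric_net n T"
    and "strongly_connected n (conf_net n T x0 q)"
  shows "influence_vector n T (\<lambda>_. 1 / real n)
       \<and> (\<forall>s. influence_vector n T s \<longrightarrow> (\<forall>i\<in>{1..n}. s i = 1 / real n))
       \<and> influence_vector n (conf_net n T x0 q) (\<lambda>_. 1 / real n)
       \<and> (\<forall>s. influence_vector n (conf_net n T x0 q) s \<longrightarrow> (\<forall>i\<in>{1..n}. s i = 1 / real n))"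
proof -
  note n1 = assms(1)
  have nn: "\<forall>i\<in>{1..n}. \<forall>j\<in>{1..n}. 0 \<le> T i j"
    and rs: "\<forall>i\<in>{1..n}. (\<Sum>j\<in>{1..n}. T i j) = 1"
    using assms(2) unfolding row_stochastic_def by auto
  have sym: "\<forall>i\<in>{1..n}. \<forall>j\<in>{1..n}. T i j = T j i"
    using assms(8) unfolding symmetric_net_def by auto
  let ?C = "conf_net n T x0 q"
  have csym: "\<forall>i\<in>{1..n}. \<forall>j\<in>{1..n}. ?C i j = ?C j i"
    using sym by (auto simp: conf_net_def abs_minus_commute)
  have cnn: "\<forall>i\<in>{1..n}. \<forall>j\<in>{1..n}. 0 \<le> ?C i j"
  proof (intro ballI)
    fix i j assume i: "i \<in> {1..n}" and j: "j \<in> {1..n}"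
    have "0 \<le> (\<Sum>k\<in>{k\<in>{1..n}. k \<noteq> i \<and> \<bar>x0 i - x0 k\<bar> > 1 - q}. T i k)"
      using nn i by (intro sum_nonneg) auto
    then show "0 \<le> ?C i j" using nn i j by (auto simp: conf_net_def)
  qed
  have crs: "\<forall>i\<in>{1..n}. (\<Sum>j\<in>{1..n}. ?C i j) = 1"
  proof
    fix i assume i: "i \<in> {1..n}"
    define B where "B = {k\<in>{1..n}. k \<noteq> i \<and> \<bar>x0 i - x0 k\<bar> > 1 - q}"
    define S where "S = (\<Sum>k\<in>B. T i k)"
    have eq: "?C i j = T i j + (if j = i then S else 0) - (if j \<in> B then T i j else 0)"
      if j: "j \<in> {1..n}" for j
      using j by (auto simp: conf_net_def B_def S_def)
    have "(\<Sum>j\<in>{1..n}. ?C i j) = (\<Sum>j\<in>{1..n}. T i j + (if j = i then S else 0) - (if j \<in> B then T i j else 0))"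
      using eq by (rule sum.cong[OF refl])
    also have "\<dots> = (\<Sum>j\<in>{1..n}. T i j) + (\<Sum>j\<in>{1..n}. (if j = i then S else 0)) - (\<Sum>j\<in>{1..n}. (if j \<in> B then T i j else 0))"
      by (simp add: sum.distrib sum_subtractf)
    also have "(\<Sum>j\<in>{1..n}. (if j = i then S else 0)) = S" using i by simp
    also have "(\<Sum>j\<in>{1..n}. (if j \<in> B then T i j else 0)) = S"
    proof -
      have fB: "finite {1..n}" by simp
      have "{1..n} \<inter> B = B" by (auto simp: B_def)
      then show ?thesis unfolding S_def using sum.inter_restrict[OF fB, of "T i" B] by simp
    qed
    finally show "(\<Sum>j\<in>{1..n}. ?C i j) = 1" using rs i by simp
  qed
  show ?thesis
    using uniform_inf[OF n1 rs sym] harmonic_const[OF n1 nn rs sym assms(3)]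
      uniform_inf[OF n1 crs csym] harmonic_const[OF n1 cnn crs csym assms(9)]
    by blast
qed

end
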